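(* Fix $I_{ij},I_{jk},I_{ki}\in[0,\infty)$. Consider the set $$\mathcal{R}_H^{ijk}=\{(r_i,r_j,r_k)\in\mathbb{R}^3_{>0}:\ l_{ij},l_{jk},l_{ki}\text{ satisfy the strict triangle inequalities}\},$$ where $l_{ij},l_{jk},l_{ki}>0$ are given by $$\cosh l_{ij}=\cosh r_i\cosh r_j+I_{ij}\sinh r_i\sinh r_j,$$ $$\cosh l_{jk}=\cosh r_j\cosh r_k+I_{jk}\sinh r_j\sinh r_k,$$ $$\cosh l_{ki}=\cosh r_k\cosh r_i+I_{ki}\sinh r_k\sinh r_i.$$ Then $\mathcal{R}_H^{ijk}$ is a connected and simply connected open subset of $\mathbb{R}^3_{>0}$. *)

theory Defs
  imports "HOL-Analysis.Analysis"
begin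

definition hyp_edge :: "real \<Rightarrow> real \<Rightarrow> real \<Rightarrow> real" where
  "hyp_edge I a b = arcosh (cosh a * cosh b + I * sinh a * sinh b)"

definition strict_triangle :: "real \<Rightarrow> real \<Rightarrow> real \<Rightarrow> bool" where
  "strict_triangle x y z \<longleftrightarrow> x < y + z \<and> y < z + x \<and> z < x + y"

definition R_H :: "real \<Rightarrow> real \<Rightarrow> real \<Rightarrow> (real \<times> real \<times> real) set" where
  "R_H Iij Ijk Iki = {(ri, rj, rk). ri > 0 \<and> rj > 0 \<and> rk > 0 \<and>
      strict_triangle (hyp_edge Iij ri rj) (hyp_edge Ijk rj rk) (hyp_edge Iki rk ri)}"

end

theory Submission
  imports Defs
begin

definition Phi :: "real \<Rightarrow> real \<Rightarrow> real \<Rightarrow> real \<Rightarrow> real \<Rightarrow> real \<Rightarrow> real \<Rightarrow> bool" where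
  "Phi a b e p q w u \<longleftrightarrow> b*u^2 - q*w - p*(e*q + a*w) - a*e
     < sqrt ((u^2 + q^2 + 2*a*p*q + a^2) * (u^2 + w^2 + 2*e*p*w + e^2))"

lemma Phi_scale:
  fixes a b e p q w u p' q' w' u' m :: real
  assumes abe: "a \<ge> 0" "b \<ge> 0" "e \<ge> 0"
    and pos: "p \<ge> 0" "q \<ge> 0" "w \<ge> 0" and m: "m \<ge> 1"
    and mp: "m*p' \<ge> p" and mq: "m*q' \<ge> q" and mw: "m*w' \<ge> w" and mu: "m*u' = u"
    and H: "Phi a b e p q w u"
  shows "Phi a b e p' q' w' u'"
proof -
  define P where "P = m*p'"
  define Q where "Q = m*q'"
  define W where "W = m*w'"
  define T where "T = m^2"
  have T1: "T \<ge> 1" using m unfolding T_def by (simp add: one_le_power)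
  have PQ: "P*Q \<ge> p*q" unfolding P_def Q_def using mp mq pos by (intro mult_mono) auto
  have PW: "P*W \<ge> p*w" unfolding P_def W_def using mp mw pos by (intro mult_mono) auto
  have QW: "Q*W \<ge> q*w" unfolding Q_def W_def using mq mw pos by (intro mult_mono) auto
  have QQ: "Q^2 \<ge> q^2" unfolding Q_def using mq pos by (intro power_mono) auto
  have WW: "W^2 \<ge> w^2" unfolding W_def using mw pos by (intro power_mono) auto
  have uu: "T*u'^2 = u^2" unfolding T_def using mu by (simp add: power_mult_distrib[symmetric])
  define L where "L = b*u^2 - q*w - p*(e*q + a*w) - a*e"
  define L' where "L' = b*u'^2 - q'*w' - p'*(e*q' + a*w') - a*e"
  define N1 where "N1 = u^2 + q^2 + 2*a*p*q + a^2"
  define N2 where "N2 = u^2 + w^2 + 2*e*p*w + e^2"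
  define N1' where "N1' = u'^2 + q'^2 + 2*a*p'*q' + a^2"
  define N2' where "N2' = u'^2 + w'^2 + 2*e*p'*w' + e^2"
  have TL: "T*L' = b*u^2 - Q*W - e*(P*Q) - a*(P*W) - T*a*e"
    unfolding L'_def P_def Q_def W_def T_def uu[symmetric, unfolded T_def]
    by (simp add: algebra_simps power2_eq_square)
  have TN1: "T*N1' = u^2 + Q^2 + 2*a*(P*Q) + T*a^2"
    unfolding N1'_def P_def Q_def W_def T_def uu[symmetric, unfolded T_def]
    by (simp add: algebra_simps power2_eq_square)
  have TN2: "T*N2' = u^2 + W^2 + 2*e*(P*W) + T*e^2"
    unfolding N2'_def P_def Q_def W_def T_def uu[symmetric, unfolded T_def]
    by (simp add: algebra_simps power2_eq_square)
  have "e*(P*Q) \<ge> e*(p*q)" using PQ abe by (simp add: mult_left_mono)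
  moreover have "a*(P*W) \<ge> a*(p*w)" using PW abe by (simp add: mult_left_mono)
  moreover have "T*a*e \<ge> a*e" using mult_right_mono[OF T1, of "a*e"] abe by (simp add: mult.assoc)
  ultimately have Lle: "T*L' \<le> L" unfolding TL L_def using QW by (simp add: algebra_simps)
  have "a*(P*Q) \<ge> a*(p*q)" using PQ abe by (simp add: mult_left_mono)
  moreover have "T*a^2 \<ge> a^2" using mult_right_mono[OF T1, of "a^2"] by simp
  ultimately have N1le: "N1 \<le> T*N1'" unfolding TN1 N1_def using QQ by simp
  have "e*(P*W) \<ge> e*(p*w)" using PW abe by (simp add: mult_left_mono)
  moreover have "T*e^2 \<ge> e^2" using mult_right_mono[OF T1, of "e^2"] by simp
  ultimately have N2le: "N2 \<le> T*N2'" unfolding TN2 N2_def using WW by simp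
  have N1nn: "N1 \<ge> 0" unfolding N1_def using abe pos by simp
  have N2nn: "N2 \<ge> 0" unfolding N2_def using abe pos by simp
  have "L < sqrt (N1*N2)" using H unfolding Phi_def L_def N1_def N2_def .
  also have "sqrt (N1*N2) \<le> sqrt ((T*N1')*(T*N2'))"
    using N1le N2le N1nn N2nn by (intro real_sqrt_le_mono mult_mono) auto
  also have "sqrt ((T*N1')*(T*N2')) = T * sqrt (N1'*N2')"
    using T1 by (simp add: real_sqrt_mult algebra_simps)
  finally have "T*L' < T * sqrt (N1'*N2')" using Lle by linarith
  hence "L' < sqrt (N1'*N2')" using T1 by simp
  thus ?thesis unfolding Phi_def L'_def N1'_def N2'_def .
qed


lemma edge_tri_iff:
  fixes a b e x y z :: real
  assumes abe: "a \<ge> 0" "b \<ge> 0" "e \<ge> 0" and xyz: "x > 0" "y > 0" "z > 0"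
  shows "hyp_edge b y z < hyp_edge a x y + hyp_edge e z x \<longleftrightarrow>
    Phi a b e (cosh x / sinh x) (cosh y / sinh y) (cosh z / sinh z) (1 / sinh x)"
proof -
  define X where "X = cosh x"
  define Y where "Y = cosh y"
  define Z where "Z = cosh z"
  define hx where "hx = sinh x"
  define hy where "hy = sinh y"
  define hz where "hz = sinh z"
  have hpos: "hx > 0" "hy > 0" "hz > 0" using xyz by (auto simp: hx_def hy_def hz_def)
  have X1: "X \<ge> 1" "Y \<ge> 1" "Z \<ge> 1" by (auto simp: X_def Y_def Z_def cosh_real_ge_1)
  have sq: "X^2 = hx^2 + 1" "Y^2 = hy^2 + 1" "Z^2 = hz^2 + 1"
    by (auto simp: X_def Y_def Z_def hx_def hy_def hz_def cosh_square_eq)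
  define A where "A = X * Y + a * hx * hy"
  define B where "B = Y * Z + b * hy * hz"
  define C where "C = Z * X + e * hz * hx"
  have one: "1 \<le> X * Y" "1 \<le> Y * Z" "1 \<le> Z * X" using X1
    by (metis mult_mono mult_1 order_trans zero_le_one)+
  have A1: "A \<ge> 1" unfolding A_def using one abe hpos by (simp add: add_increasing2)
  have B1: "B \<ge> 1" unfolding B_def using one abe hpos by (simp add: add_increasing2)
  have C1: "C \<ge> 1" unfolding C_def using one abe hpos by (simp add: add_increasing2)
  have hA: "hyp_edge a x y = arcosh A" by (simp add: hyp_edge_def A_def X_def Y_def hx_def hy_def)
  have hB: "hyp_edge b y z = arcosh B" by (simp add: hyp_edge_def B_def Z_def Y_def hz_def hy_def)
  have hC: "hyp_edge e z x = arcosh C" by (simp add: hyp_edge_def C_def X_def Z_def hx_def hz_def)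
  have "arcosh B < arcosh A + arcosh C \<longleftrightarrow> cosh (arcosh B) < cosh (arcosh A + arcosh C)"
    using A1 B1 C1 by (intro cosh_real_nonneg_less_iff[symmetric]) auto
  also have "\<dots> \<longleftrightarrow> B < A * C + sqrt (A^2 - 1) * sqrt (C^2 - 1)"
    using A1 B1 C1 by (simp add: cosh_add sinh_arcosh_real)
  finally have step1: "hyp_edge b y z < hyp_edge a x y + hyp_edge e z x \<longleftrightarrow>
     B < A * C + sqrt (A^2 - 1) * sqrt (C^2 - 1)" unfolding hA hB hC .
  define p where "p = X / hx"
  define q where "q = Y / hy"
  define w where "w = Z / hz"
  define u where "u = 1 / hx"
  define N1 where "N1 = u^2 + q^2 + 2*a*p*q + a^2"
  define N2 where "N2 = u^2 + w^2 + 2*e*p*w + e^2"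
  define L where "L = b*u^2 - q*w - p*(e*q + a*w) - a*e"
  have iA: "A^2 - 1 = (hx*hy)^2 * N1"
  proof -
    have "(hx*hy)^2 * N1 = hy^2 + hx^2*Y^2 + 2*a*X*Y*hx*hy + a^2*hx^2*hy^2"
      using hpos by (simp add: N1_def u_def p_def q_def field_simps power2_eq_square)
    also have "\<dots> = A^2 - 1" unfolding A_def using sq by algebra
    finally show ?thesis ..
  qed
  have iC: "C^2 - 1 = (hz*hx)^2 * N2"
  proof -
    have "(hz*hx)^2 * N2 = hz^2 + hx^2*Z^2 + 2*e*X*Z*hx*hz + e^2*hx^2*hz^2"
      using hpos by (simp add: N2_def u_def p_def w_def field_simps power2_eq_square)
    also have "\<dots> = C^2 - 1" unfolding C_def using sq by algebra
    finally show ?thesis ..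
  qed
  have iB: "B - A * C = (hx^2*hy*hz) * L"
  proof -
    have "(hx^2*hy*hz) * L = b*hy*hz - hx^2*Y*Z - X*hx*(e*Y*hz + a*Z*hy) - a*e*hx^2*hy*hz"
      using hpos by (simp add: L_def u_def p_def q_def w_def field_simps power2_eq_square)
    also have "\<dots> = B - A * C" unfolding A_def B_def C_def using sq by algebra
    finally show ?thesis ..
  qed
  have ppos: "p > 0" "q > 0" "w > 0" using hpos X1 by (auto simp: p_def q_def w_def)
  have N1nn: "N1 \<ge> 0" unfolding N1_def using ppos abe by simp
  have N2nn: "N2 \<ge> 0" unfolding N2_def using ppos abe by simp
  have G: "hx^2*hy*hz > 0" using hpos by simp
  have "sqrt (A^2 - 1) * sqrt (C^2 - 1) = (hx^2*hy*hz) * sqrt (N1 * N2)"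
    unfolding iA iC using hpos N1nn N2nn
    by (simp add: real_sqrt_mult power2_eq_square)
  hence "B < A * C + sqrt (A^2 - 1) * sqrt (C^2 - 1) \<longleftrightarrow> (hx^2*hy*hz) * L < (hx^2*hy*hz) * sqrt (N1 * N2)"
    using iB by (smt (verit))
  also have "\<dots> \<longleftrightarrow> L < sqrt (N1 * N2)" using G by (rule mult_less_cancel_left_pos)
  finally show ?thesis unfolding step1 Phi_def L_def N1_def N2_def p_def q_def w_def u_def
    X_def Y_def Z_def hx_def hy_def hz_def .
qed


lemma scale_facts:
  fixes m t :: real
  assumes m: "m \<ge> 1" and t: "t > 0"
  shows "arsinh (m * sinh t) > 0" "sinh (arsinh (m * sinh t)) = m * sinh t"
    "m * (cosh (arsinh (m * sinh t)) / sinh (arsinh (m * sinh t))) \<ge> cosh t / sinh t"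
proof -
  have st: "sinh t > 0" using t by simp
  show "arsinh (m * sinh t) > 0" using st m by simp
  show s': "sinh (arsinh (m * sinh t)) = m * sinh t" by simp
  have "m * sinh t \<ge> sinh t" using m st by (simp add: mult_right_mono[of 1 m "sinh t", simplified])
  hence "sinh t \<le> sinh (arsinh (m * sinh t))" by simp
  hence tt: "t \<le> arsinh (m * sinh t)" by (simp only: sinh_real_le_iff)
  hence "cosh t \<le> cosh (arsinh (m * sinh t))" using t by (subst cosh_real_nonneg_le_iff) auto
  hence "cosh t / sinh t \<le> cosh (arsinh (m * sinh t)) / sinh t" using st by (simp add: divide_right_mono)
  also have "\<dots> = m * (cosh (arsinh (m * sinh t)) / sinh (arsinh (m * sinh t)))"
    using m st by (simp add: s' field_simps)
  finally show "m * (cosh (arsinh (m * sinh t)) / sinh (arsinh (m * sinh t))) \<ge> cosh t / sinh t" .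
qed

lemma edge_tri_scale:
  fixes a b e x y z m :: real
  assumes abe: "a \<ge> 0" "b \<ge> 0" "e \<ge> 0" and xyz: "x > 0" "y > 0" "z > 0" and m: "m \<ge> 1"
    and H: "hyp_edge b y z < hyp_edge a x y + hyp_edge e z x"
  shows "hyp_edge b (arsinh (m * sinh y)) (arsinh (m * sinh z))
     < hyp_edge a (arsinh (m * sinh x)) (arsinh (m * sinh y)) + hyp_edge e (arsinh (m * sinh z)) (arsinh (m * sinh x))"
proof -
  define x' where "x' = arsinh (m * sinh x)"
  define y' where "y' = arsinh (m * sinh y)"
  define z' where "z' = arsinh (m * sinh z)"
  note fx = scale_facts[OF m xyz(1), folded x'_def]
  note fy = scale_facts[OF m xyz(2), folded y'_def]
  note fz = scale_facts[OF m xyz(3), folded z'_def]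
  have P: "Phi a b e (cosh x / sinh x) (cosh y / sinh y) (cosh z / sinh z) (1 / sinh x)"
    using edge_tri_iff[OF abe xyz] H by simp
  have mu: "m * (1 / sinh x') = 1 / sinh x" using fx(2) m by simp
  have pos: "cosh x / sinh x \<ge> 0" "cosh y / sinh y \<ge> 0" "cosh z / sinh z \<ge> 0"
    using xyz by auto
  have "Phi a b e (cosh x' / sinh x') (cosh y' / sinh y') (cosh z' / sinh z') (1 / sinh x')"
    by (rule Phi_scale[OF abe pos m fx(3) fy(3) fz(3) mu P])
  thus ?thesis using edge_tri_iff[OF abe fx(1) fy(1) fz(1)] unfolding x'_def y'_def z'_def by simp
qed

lemma edge_tri_big:
  fixes a b e x y z :: real
  assumes abe: "a \<ge> 0" "b \<ge> 0" "e \<ge> 0" and xyz: "x > 0" "y > 0" "z > 0"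
    and big: "sinh x > 1 + b"
  shows "hyp_edge b y z < hyp_edge a x y + hyp_edge e z x"
proof -
  define p where "p = cosh x / sinh x"
  define q where "q = cosh y / sinh y"
  define w where "w = cosh z / sinh z"
  define u where "u = 1 / sinh x"
  have q1: "q > 1" "w > 1" using xyz sinh_less_cosh_real[of y] sinh_less_cosh_real[of z]
    by (auto simp: q_def w_def)
  have p0: "p > 0" using xyz by (simp add: p_def)
  have hx: "sinh x > 0" using xyz by simp
  have "b < sinh x ^ 2" using big abe by (simp add: power2_eq_square) (smt (verit) mult_less_cancel_left1)
  hence bu: "b * u^2 < 1" using hx by (simp add: u_def field_simps)
  have "q * w > 1" using q1 by (metis less_trans mult_less_cancel_left1 zero_less_one mult_strict_mono' less_eq_real_def) 
  moreover have "p * (e*q + a*w) \<ge> 0" using p0 q1 abe by simp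
  moreover have "a * e \<ge> 0" using abe by simp
  ultimately have "b*u^2 - q*w - p*(e*q + a*w) - a*e < 0" using bu by linarith
  also have "0 \<le> sqrt ((u^2 + q^2 + 2*a*p*q + a^2) * (u^2 + w^2 + 2*e*p*w + e^2))"
    using p0 q1 abe by simp
  finally have "Phi a b e p q w u" unfolding Phi_def .
  thus ?thesis using edge_tri_iff[OF abe xyz] by (simp add: p_def q_def w_def u_def)
qed


definition psi :: "real \<Rightarrow> real \<times> real \<times> real \<Rightarrow> real \<times> real \<times> real" where
  "psi m r = (arsinh (m * sinh (fst r)), arsinh (m * sinh (fst (snd r))), arsinh (m * sinh (snd (snd r))))"

lemma R_H_mem: "(ri, rj, rk) \<in> R_H Iij Ijk Iki \<longleftrightarrow> ri > 0 \<and> rj > 0 \<and> rk > 0 \<and>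
   hyp_edge Iij ri rj < hyp_edge Ijk rj rk + hyp_edge Iki rk ri \<and>
   hyp_edge Ijk rj rk < hyp_edge Iki rk ri + hyp_edge Iij ri rj \<and>
   hyp_edge Iki rk ri < hyp_edge Iij ri rj + hyp_edge Ijk rj rk"
  by (simp add: R_H_def strict_triangle_def)

lemma R_H_psi:
  assumes I: "Iij \<ge> 0" "Ijk \<ge> 0" "Iki \<ge> 0" and r: "r \<in> R_H Iij Ijk Iki" and m: "m \<ge> 1"
  shows "psi m r \<in> R_H Iij Ijk Iki"
proof -
  obtain ri rj rk where rr: "r = (ri, rj, rk)" by (cases r) auto
  have h: "ri > 0" "rj > 0" "rk > 0"
    "hyp_edge Iij ri rj < hyp_edge Ijk rj rk + hyp_edge Iki rk ri"
    "hyp_edge Ijk rj rk < hyp_edge Iki rk ri + hyp_edge Iij ri rj"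
    "hyp_edge Iki rk ri < hyp_edge Iij ri rj + hyp_edge Ijk rj rk"
    using r unfolding rr R_H_mem by auto
  define f where "f t = arsinh (m * sinh t)" for t
  have fp: "f ri > 0" "f rj > 0" "f rk > 0" using scale_facts(1)[OF m] h by (auto simp: f_def)
  have 1: "hyp_edge Iij (f ri) (f rj) < hyp_edge Iki (f rk) (f ri) + hyp_edge Ijk (f rj) (f rk)"
    unfolding f_def by (rule edge_tri_scale[OF I(3) I(1) I(2) h(3) h(1) h(2) m]) (use h in linarith)
  have 2: "hyp_edge Ijk (f rj) (f rk) < hyp_edge Iij (f ri) (f rj) + hyp_edge Iki (f rk) (f ri)"
    unfolding f_def by (rule edge_tri_scale[OF I(1) I(2) I(3) h(1) h(2) h(3) m]) (use h in linarith)
  have 3: "hyp_edge Iki (f rk) (f ri) < hyp_edge Ijk (f rj) (f rk) + hyp_edge Iij (f ri) (f rj)"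
    unfolding f_def by (rule edge_tri_scale[OF I(2) I(3) I(1) h(2) h(3) h(1) m]) (use h in linarith)
  have eq: "psi m r = (f ri, f rj, f rk)" by (simp add: psi_def rr f_def)
  show ?thesis unfolding eq R_H_mem using fp 1 2 3 by linarith
qed

lemma arsinh_lt_imp: "arsinh M < (t::real) \<Longrightarrow> M < sinh t"
  by (metis sinh_arsinh_real sinh_real_less_iff)

lemma R_H_big:
  assumes I: "Iij \<ge> 0" "Ijk \<ge> 0" "Iki \<ge> 0"
    and r: "arsinh (1 + Iij + Ijk + Iki) < fst r" "arsinh (1 + Iij + Ijk + Iki) < fst (snd r)"
       "arsinh (1 + Iij + Ijk + Iki) < snd (snd r)"
  shows "r \<in> R_H Iij Ijk Iki"
proof -
  obtain ri rj rk where rr: "r = (ri, rj, rk)" by (cases r) auto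
  have M: "arsinh (1 + Iij + Ijk + Iki) > 0" using I by simp
  have sh: "sinh ri > 1 + Iij + Ijk + Iki" "sinh rj > 1 + Iij + Ijk + Iki" "sinh rk > 1 + Iij + Ijk + Iki"
    using r unfolding rr by (auto intro: arsinh_lt_imp)
  have h: "ri > 0" "rj > 0" "rk > 0" using less_trans[OF M r(1)] less_trans[OF M r(2)] less_trans[OF M r(3)] unfolding rr by simp_all
  have 1: "hyp_edge Iij ri rj < hyp_edge Iki rk ri + hyp_edge Ijk rj rk"
    by (rule edge_tri_big[OF I(3) I(1) I(2) h(3) h(1) h(2)]) (use sh I in linarith)
  have 2: "hyp_edge Ijk rj rk < hyp_edge Iij ri rj + hyp_edge Iki rk ri"
    by (rule edge_tri_big[OF I(1) I(2) I(3) h(1) h(2) h(3)]) (use sh I in linarith)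
  have 3: "hyp_edge Iki rk ri < hyp_edge Ijk rj rk + hyp_edge Iij ri rj"
    by (rule edge_tri_big[OF I(2) I(3) I(1) h(2) h(3) h(1)]) (use sh I in linarith)
  show ?thesis unfolding rr R_H_mem using h 1 2 3 by linarith
qed


lemma continuous_on_arsinh_gen [continuous_intros]:
  fixes f :: "'a::topological_space \<Rightarrow> real"
  shows "continuous_on A f \<Longrightarrow> continuous_on A (\<lambda>x. arsinh (f x))"
  by (rule continuous_on_compose2[OF continuous_on_arsinh]) auto

lemma cosh_cosh_ge1:
  fixes I x y :: real
  assumes "I \<ge> 0" "x \<ge> 0" "y \<ge> 0"
  shows "1 \<le> cosh x * cosh y + I * sinh x * sinh y"
proof -
  have "1 \<le> cosh x * cosh y" using cosh_real_ge_1[of x] cosh_real_ge_1[of y]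
    by (metis mult_mono mult_1 order_trans zero_le_one)
  moreover have "I * sinh x * sinh y \<ge> 0" using assms by simp
  ultimately show ?thesis by linarith
qed

lemma convex_comb_gt:
  fixes N a b u v :: real
  assumes "N < a" "N < b" "0 \<le> u" "0 \<le> v" "u + v = 1"
  shows "N < u * a + v * b"
proof (cases "u = 0")
  case True thus ?thesis using assms by simp
next
  case False
  hence "u * (a - N) > 0" using assms by simp
  moreover have "v * (b - N) \<ge> 0" using assms by simp
  ultimately have "u * a + v * b > (u + v) * N" by (simp add: algebra_simps)
  thus ?thesis using assms by simp
qed

lemma K_bound:
  fixes M s1 s2 s3 :: real
  assumes "0 < s1" "0 < s2" "0 < s3" "0 \<le> M"
  shows "M < (1 + M * (1/s1 + 1/s2 + 1/s3)) * s1" "M < (1 + M * (1/s1 + 1/s2 + 1/s3)) * s2"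
    "M < (1 + M * (1/s1 + 1/s2 + 1/s3)) * s3"
proof -
  have a: "M * (1/s1 + 1/s2 + 1/s3) \<ge> M * (1/s1)" "M * (1/s1 + 1/s2 + 1/s3) \<ge> M * (1/s2)"
     "M * (1/s1 + 1/s2 + 1/s3) \<ge> M * (1/s3)"
    by (rule mult_left_mono, use assms in simp, use assms in simp)+
  have "(1 + M * (1/s1 + 1/s2 + 1/s3)) * s1 \<ge> (1 + M * (1/s1)) * s1"
    using a assms by (intro mult_right_mono) auto
  moreover have "(1 + M * (1/s1)) * s1 = s1 + M" using assms by (simp add: field_simps)
  ultimately show "M < (1 + M * (1/s1 + 1/s2 + 1/s3)) * s1" using assms by linarith
  have "(1 + M * (1/s1 + 1/s2 + 1/s3)) * s2 \<ge> (1 + M * (1/s2)) * s2"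
    using a assms by (intro mult_right_mono) auto
  moreover have "(1 + M * (1/s2)) * s2 = s2 + M" using assms by (simp add: field_simps)
  ultimately show "M < (1 + M * (1/s1 + 1/s2 + 1/s3)) * s2" using assms by linarith
  have "(1 + M * (1/s1 + 1/s2 + 1/s3)) * s3 \<ge> (1 + M * (1/s3)) * s3"
    using a assms by (intro mult_right_mono) auto
  moreover have "(1 + M * (1/s3)) * s3 = s3 + M" using assms by (simp add: field_simps)
  ultimately show "M < (1 + M * (1/s1 + 1/s2 + 1/s3)) * s3" using assms by linarith
qed

theorem lemma3p1:
  fixes Iij Ijk Iki :: real
  assumes "Iij \<ge> 0" and "Ijk \<ge> 0" and "Iki \<ge> 0"
  shows "R_H Iij Ijk Iki \<subseteq> {(ri, rj, rk). ri > 0 \<and> rj > 0 \<and> rk > 0}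
    \<and> open (R_H Iij Ijk Iki) \<and> connected (R_H Iij Ijk Iki)
    \<and> simply_connected (R_H Iij Ijk Iki)"
proof -
  let ?S = "R_H Iij Ijk Iki"
  have posS: "0 < fst r \<and> 0 < fst (snd r) \<and> 0 < snd (snd r)" if "r \<in> ?S" for r
    using that by (cases r) (simp add: R_H_mem)
  have sub: "?S \<subseteq> {(ri, rj, rk). ri > 0 \<and> rj > 0 \<and> rk > 0}"
    by (auto simp: R_H_def)
  define Opos where "Opos = {r::real \<times> real \<times> real. 0 < fst r \<and> 0 < fst (snd r) \<and> 0 < snd (snd r)}"
  have oO: "open Opos" unfolding Opos_def
    by (intro open_Collect_conj open_Collect_less continuous_intros)
  define E1 where "E1 r = hyp_edge Iij (fst r) (fst (snd r))" for r :: "real \<times> real \<times> real"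
  define E2 where "E2 r = hyp_edge Ijk (fst (snd r)) (snd (snd r))" for r :: "real \<times> real \<times> real"
  define E3 where "E3 r = hyp_edge Iki (snd (snd r)) (fst r)" for r :: "real \<times> real \<times> real"
  have c1: "continuous_on Opos E1" unfolding E1_def hyp_edge_def
    by (rule continuous_on_compose2[OF continuous_on_arcosh[OF order_refl]]) (auto intro!: continuous_intros cosh_cosh_ge1 simp: Opos_def assms less_imp_le)
  have c2: "continuous_on Opos E2" unfolding E2_def hyp_edge_def
    by (rule continuous_on_compose2[OF continuous_on_arcosh[OF order_refl]]) (auto intro!: continuous_intros cosh_cosh_ge1 simp: Opos_def assms less_imp_le)
  have c3: "continuous_on Opos E3" unfolding E3_def hyp_edge_def
    by (rule continuous_on_compose2[OF continuous_on_arcosh[OF order_refl]]) (auto intro!: continuous_intros cosh_cosh_ge1 simp: Opos_def assms less_imp_le)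
  have Seq: "?S = (Opos \<inter> (\<lambda>r. E2 r + E3 r - E1 r) -` {0<..}) \<inter> (Opos \<inter> (\<lambda>r. E3 r + E1 r - E2 r) -` {0<..})
      \<inter> (Opos \<inter> (\<lambda>r. E1 r + E2 r - E3 r) -` {0<..})"
  proof (rule set_eqI)
    fix r :: "real \<times> real \<times> real"
    obtain a b c where rr: "r = (a, b, c)" by (cases r) auto
    show "r \<in> ?S \<longleftrightarrow> r \<in> (Opos \<inter> (\<lambda>r. E2 r + E3 r - E1 r) -` {0<..}) \<inter> (Opos \<inter> (\<lambda>r. E3 r + E1 r - E2 r) -` {0<..})
      \<inter> (Opos \<inter> (\<lambda>r. E1 r + E2 r - E3 r) -` {0<..})"
      unfolding rr R_H_mem by (auto simp: Opos_def E1_def E2_def E3_def)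
  qed
  have opn: "open ?S" unfolding Seq
    using c1 c2 c3 oO by (intro open_Int continuous_open_preimage continuous_intros) auto
  define M where "M = 1 + Iij + Ijk + Iki"
  have M1: "M \<ge> 1" using assms by (simp add: M_def)
  define N where "N = arsinh M"
  define K where "K r = M * (1 / sinh (fst r) + 1 / sinh (fst (snd r)) + 1 / sinh (snd (snd r)))"
    for r :: "real \<times> real \<times> real"
  define g where "g r = psi (1 + K r) r" for r
  define c where "c = (N + 1, N + 1, N + 1)"
  define B where "B = {r::real \<times> real \<times> real. N < fst r \<and> N < fst (snd r) \<and> N < snd (snd r)}"
  have BS: "B \<subseteq> ?S" using R_H_big[OF assms] unfolding B_def N_def M_def by auto
  have cB: "c \<in> B" by (simp add: c_def B_def)
  have convB: "convex B" unfolding convex_def B_def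
    by (auto intro!: convex_comb_gt)
  have K0: "K r \<ge> 0" if "r \<in> ?S" for r
    using posS[OF that] M1 unfolding K_def by (auto intro!: mult_nonneg_nonneg add_nonneg_nonneg)
  have gB: "g r \<in> B" if "r \<in> ?S" for r
  proof -
    have p: "0 < sinh (fst r)" "0 < sinh (fst (snd r))" "0 < sinh (snd (snd r))" using posS[OF that] by auto
    note kb = K_bound[OF p, of M]
    show ?thesis unfolding g_def psi_def B_def N_def K_def using kb M1 by simp
  qed
  have cont: "continuous_on ({0..1} \<times> ?S) (\<lambda>p. psi (1 + fst p * K (snd p)) (snd p))"
    unfolding psi_def K_def by (intro continuous_intros) (auto dest!: posS)
  have contg: "continuous_on ?S g"
    unfolding g_def psi_def K_def by (intro continuous_intros) (auto dest!: posS)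
  have img: "psi (1 + fst p * K (snd p)) (snd p) \<in> ?S" if "p \<in> {0..1} \<times> ?S" for p
  proof -
    have "snd p \<in> ?S" "fst p \<ge> 0" using that by auto
    moreover have "fst p * K (snd p) \<ge> 0" using calculation K0 by simp
    ultimately show ?thesis using R_H_psi[OF assms] by simp
  qed
  have h0: "psi (1 + 0 * K x) x = id x" for x by (simp add: psi_def arsinh_sinh_real)
  have hom1: "homotopic_with_canon (\<lambda>x. True) ?S ?S id g"
    unfolding homotopic_with_def
    apply (rule exI[where x="\<lambda>p. psi (1 + fst p * K (snd p)) (snd p)"])
    using cont img h0 by (auto simp: g_def)
  have hom2: "homotopic_with_canon (\<lambda>x. True) ?S ?S g (\<lambda>x. c)"
    by (rule homotopic_with_linear[OF contg continuous_on_const])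
       (use closed_segment_subset[OF gB cB convB] BS in blast)
  have con: "contractible ?S" unfolding contractible_def
    by (rule exI[of _ c], rule homotopic_with_trans[OF hom1 hom2])
  show ?thesis using sub opn contractible_imp_connected[OF con] contractible_imp_simply_connected[OF con]
    by blast
qed

end
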